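(* Let $B>0$, $C>0$ and $\gamma\in[0,1]$ be fixed. For $\alpha\in[0,1/2]$ define $$b_{a}(\alpha)=\frac{\left(-2\alpha^4+5\alpha^3-4\alpha^2+\alpha\right)\gamma+4\alpha^4-9\alpha^3+4\alpha^2}{2\alpha^3-4\alpha^2+1},$$ $$b_{h}(\alpha)=\frac{\left(2\alpha^4-5\alpha^3+4\alpha^2-\alpha\right)\gamma-4\alpha^4+10\alpha^3-6\alpha^2-\alpha+1}{2\alpha^3-4\alpha^2+1},$$ and set $B_{\mathrm{attacker}}(\alpha)=B\,b_a(\alpha)$, $B_{\mathrm{honest}}(\alpha)=B\,b_h(\alpha)$. Let $f(\alpha)=\frac{\alpha\,B_{\mathrm{honest}}(\alpha)}{(1-\alpha)\left(B_{\mathrm{attacker}}(\alpha)+B_{\mathrm{honest}}(\alpha)\right)}$ for $\alpha\in[0,1/2]$, and let $M_{\max}=\frac{B}{C}\max_{\alpha\in[0,1/2]}f(\alpha)$. For $M>0$ and $H>0$ let $\alpha=\frac{M}{H+M}$ and define $$\mathcal{U}^S(H)=B\,\frac{B_{\mathrm{honest}}(\alpha)}{(1-\alpha)B}\cdot\frac{B}{\left(B_{\mathrm{attacker}}(\alpha)+B_{\mathrm{honest}}(\alpha)\right)(H+M)}-C.$$ Call $H^*$ an equilibrium if $H^*>M$ and $\mathcal{U}^S(H^* )=0$. Then for every $M$ with $0<M<M_{\max}$ there are exactly two equilibria $H^*_1<H^*_2$, where $H^*_2$ is stable and $H^*_1$ is unstable.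
   Context: Model of selfish mining (in the sense of Eyal and Sirer) with elastic hash supply: $B$ is the expected block reward, $C$ the cost per unit hash rate per block interval, $H$ the honest miners' total hash rate, $M$ the attacking pool's hash rate, $\gamma$ the fraction of honest miners mining on the attacker's block during a tie, and $\mathcal{U}^S(H)$ the honest miners' per-hash-rate profit under attack. Honest miners enter when profit is positive and leave when it is negative. An equilibrium $H^*$ is stable if there is $\varepsilon>0$ such that $\mathcal{U}^S(H)>0$ for $H\in(H^*-\varepsilon,H^* )$ and $\mathcal{U}^S(H)<0$ for $H\in(H^*,H^*+\varepsilon)$ (so perturbations are driven back to $H^*$); it is unstable if instead $\mathcal{U}^S(H)<0$ for $H\in(H^*-\varepsilon,H^* )$ and $\mathcal{U}^S(H)>0$ for $H\in(H^*,H^*+\varepsilon)$. *)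

theory Defs
  imports Complex_Main
begin

text \<open>Normalized attacker / honest block-reward shares (per unit B) for attacker fraction alpha.\<close>
definition b_a :: "real \<Rightarrow> real \<Rightarrow> real" where
  "b_a \<gamma> \<alpha> =
     ((-2*\<alpha>^4 + 5*\<alpha>^3 - 4*\<alpha>^2 + \<alpha>) * \<gamma> + 4*\<alpha>^4 - 9*\<alpha>^3 + 4*\<alpha>^2)
     / (2*\<alpha>^3 - 4*\<alpha>^2 + 1)"

definition b_h :: "real \<Rightarrow> real \<Rightarrow> real" where
  "b_h \<gamma> \<alpha> =
     ((2*\<alpha>^4 - 5*\<alpha>^3 + 4*\<alpha>^2 - \<alpha>) * \<gamma> - 4*\<alpha>^4 + 10*\<alpha>^3 - 6*\<alpha>^2 - \<alpha> + 1)
     / (2*\<alpha>^3 - 4*\<alpha>^2 + 1)"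

definition B_attacker :: "real \<Rightarrow> real \<Rightarrow> real \<Rightarrow> real" where
  "B_attacker B \<gamma> \<alpha> = B * b_a \<gamma> \<alpha>"

definition B_honest :: "real \<Rightarrow> real \<Rightarrow> real \<Rightarrow> real" where
  "B_honest B \<gamma> \<alpha> = B * b_h \<gamma> \<alpha>"

definition f_sm :: "real \<Rightarrow> real \<Rightarrow> real \<Rightarrow> real" where
  "f_sm B \<gamma> \<alpha> = \<alpha> * B_honest B \<gamma> \<alpha>
       / ((1 - \<alpha>) * (B_attacker B \<gamma> \<alpha> + B_honest B \<gamma> \<alpha>))"

text \<open>M_max = (B/C) * max of f over [0,1/2] (the maximum exists by continuity; written as Sup).\<close>
definition M_max :: "real \<Rightarrow> real \<Rightarrow> real \<Rightarrow> real" where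
  "M_max B C \<gamma> = B / C * Sup (f_sm B \<gamma> ` {0..1/2})"

definition U_S :: "real \<Rightarrow> real \<Rightarrow> real \<Rightarrow> real \<Rightarrow> real \<Rightarrow> real" where
  "U_S B C \<gamma> M H =
     (let \<alpha> = M / (H + M) in
       B * (B_honest B \<gamma> \<alpha> / ((1 - \<alpha>) * B))
         * (B / ((B_attacker B \<gamma> \<alpha> + B_honest B \<gamma> \<alpha>) * (H + M))) - C)"

definition equilibrium :: "(real \<Rightarrow> real) \<Rightarrow> real \<Rightarrow> real \<Rightarrow> bool" where
  "equilibrium U M Hs \<longleftrightarrow> Hs > M \<and> U Hs = 0"

definition stable_eq :: "(real \<Rightarrow> real) \<Rightarrow> real \<Rightarrow> bool" where
  "stable_eq U Hs \<longleftrightarrow> (\<exists>\<epsilon>>0. (\<forall>H\<in>{Hs-\<epsilon><..<Hs}. U H > 0) \<and> (\<forall>H\<in>{Hs<..<Hs+\<epsilon>}. U H < 0))"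

definition unstable_eq :: "(real \<Rightarrow> real) \<Rightarrow> real \<Rightarrow> bool" where
  "unstable_eq U Hs \<longleftrightarrow> (\<exists>\<epsilon>>0. (\<forall>H\<in>{Hs-\<epsilon><..<Hs}. U H < 0) \<and> (\<forall>H\<in>{Hs<..<Hs+\<epsilon>}. U H > 0))"

end

theory Submission imports Defs begin
lemma Dpol_bern: fixes x y :: real assumes "0 \<le> x" "0 \<le> y" shows "0 \<le> (3/4)*(x^0*y^3) + (9/4)*(x^1*y^2) + (5/4)*(x^2*y^1) + (0/1)*(x^3*y^0)" using assms by (intro add_nonneg_nonneg mult_nonneg_nonneg) auto

lemma Dpol_lb: fixes a :: real assumes "0 \<le> a" "a \<le> 1/2" shows "1 + (-4)*a^2 + 2*a^3 \<ge> (1/4)"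
proof -
  have e: "1 + (-4)*a^2 + 2*a^3 - ((1/4)) = (3/4)*((2*a)^0*(1-2*a)^3) + (9/4)*((2*a)^1*(1-2*a)^2) + (5/4)*((2*a)^2*(1-2*a)^1) + (0/1)*((2*a)^3*(1-2*a)^0)" by algebra
  have "0 \<le> (3/4)*((2*a)^0*(1-2*a)^3) + (9/4)*((2*a)^1*(1-2*a)^2) + (5/4)*((2*a)^2*(1-2*a)^1) + (0/1)*((2*a)^3*(1-2*a)^0)" by (rule Dpol_bern) (use assms in auto)
  then show ?thesis using e by linarith
qed
lemma Rpol_bern: fixes x y :: real assumes "0 \<le> x" "0 \<le> y" shows "0 \<le> (7/8)*(x^0*y^3) + (17/8)*(x^1*y^2) + (9/8)*(x^2*y^1) + (0/1)*(x^3*y^0)" using assms by (intro add_nonneg_nonneg mult_nonneg_nonneg) auto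

lemma Rpol_lb: fixes a :: real assumes "0 \<le> a" "a \<le> 1/2" shows "1 + (-1)*a + (-2)*a^2 + 1*a^3 \<ge> (1/8)"
proof -
  have e: "1 + (-1)*a + (-2)*a^2 + 1*a^3 - ((1/8)) = (7/8)*((2*a)^0*(1-2*a)^3) + (17/8)*((2*a)^1*(1-2*a)^2) + (9/8)*((2*a)^2*(1-2*a)^1) + (0/1)*((2*a)^3*(1-2*a)^0)" by algebra
  have "0 \<le> (7/8)*((2*a)^0*(1-2*a)^3) + (17/8)*((2*a)^1*(1-2*a)^2) + (9/8)*((2*a)^2*(1-2*a)^1) + (0/1)*((2*a)^3*(1-2*a)^0)" by (rule Rpol_bern) (use assms in auto)
  then show ?thesis using e by linarith
qed
lemma S0pol_bern: fixes x y :: real assumes "0 \<le> x" "0 \<le> y" shows "0 \<le> (0/1)*(x^0*y^6) + (34/1)*(x^1*y^5) + (117/1)*(x^2*y^4) + (143/1)*(x^3*y^3) + (303/4)*(x^4*y^2) + (63/4)*(x^5*y^1) + (1/2)*(x^6*y^0)" using assms by (intro add_nonneg_nonneg mult_nonneg_nonneg) auto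

lemma S0pol_lb: fixes a :: real assumes "0 \<le> a" "a \<le> 1/2" shows "4 + 68*a + (-212)*a^2 + 120*a^3 + 140*a^4 + (-152)*a^5 + 32*a^6 \<ge> (4/1)"
proof -
  have e: "4 + 68*a + (-212)*a^2 + 120*a^3 + 140*a^4 + (-152)*a^5 + 32*a^6 - ((4/1)) = (0/1)*((2*a)^0*(1-2*a)^6) + (34/1)*((2*a)^1*(1-2*a)^5) + (117/1)*((2*a)^2*(1-2*a)^4) + (143/1)*((2*a)^3*(1-2*a)^3) + (303/4)*((2*a)^4*(1-2*a)^2) + (63/4)*((2*a)^5*(1-2*a)^1) + (1/2)*((2*a)^6*(1-2*a)^0)" by algebra
  have "0 \<le> (0/1)*((2*a)^0*(1-2*a)^6) + (34/1)*((2*a)^1*(1-2*a)^5) + (117/1)*((2*a)^2*(1-2*a)^4) + (143/1)*((2*a)^3*(1-2*a)^3) + (303/4)*((2*a)^4*(1-2*a)^2) + (63/4)*((2*a)^5*(1-2*a)^1) + (1/2)*((2*a)^6*(1-2*a)^0)" by (rule S0pol_bern) (use assms in auto)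
  then show ?thesis using e by linarith
qed
lemma Sapol_bern: fixes x y :: real assumes "0 \<le> x" "0 \<le> y" shows "0 \<le> (35/8)*(x^0*y^6) + (145/4)*(x^1*y^5) + (741/8)*(x^2*y^4) + (203/2)*(x^3*y^3) + (403/8)*(x^4*y^2) + (75/8)*(x^5*y^1) + (0/1)*(x^6*y^0)" using assms by (intro add_nonneg_nonneg mult_nonneg_nonneg) auto

lemma Sapol_lb: fixes a :: real assumes "0 \<le> a" "a \<le> 1/2" shows "8 + 20*a + (-92)*a^2 + 48*a^3 + 76*a^4 + (-76)*a^5 + 16*a^6 \<ge> (29/8)"
proof -
  have e: "8 + 20*a + (-92)*a^2 + 48*a^3 + 76*a^4 + (-76)*a^5 + 16*a^6 - ((29/8)) = (35/8)*((2*a)^0*(1-2*a)^6) + (145/4)*((2*a)^1*(1-2*a)^5) + (741/8)*((2*a)^2*(1-2*a)^4) + (203/2)*((2*a)^3*(1-2*a)^3) + (403/8)*((2*a)^4*(1-2*a)^2) + (75/8)*((2*a)^5*(1-2*a)^1) + (0/1)*((2*a)^6*(1-2*a)^0)" by algebra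
  have "0 \<le> (35/8)*((2*a)^0*(1-2*a)^6) + (145/4)*((2*a)^1*(1-2*a)^5) + (741/8)*((2*a)^2*(1-2*a)^4) + (203/2)*((2*a)^3*(1-2*a)^3) + (403/8)*((2*a)^4*(1-2*a)^2) + (75/8)*((2*a)^5*(1-2*a)^1) + (0/1)*((2*a)^6*(1-2*a)^0)" by (rule Sapol_bern) (use assms in auto)
  then show ?thesis using e by linarith
qed
definition Qp :: "real \<Rightarrow> real \<Rightarrow> real" where
  "Qp \<gamma> a = 2*a^3-4*a^2+a+1-\<gamma>*a*(1-a)^2"
definition Rp :: "real \<Rightarrow> real" where
  "Rp a = a^3-2*a^2-a+1"
definition gq :: "real \<Rightarrow> real \<Rightarrow> real" where
  "gq \<gamma> a = a*(1-2*a)*Qp \<gamma> a / ((1-a)*Rp a)"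
definition Pp :: "real \<Rightarrow> real \<Rightarrow> real" where
  "Pp \<gamma> a = (1 + (-2)*a + (-15)*a^2 + 58*a^3 + (-68)*a^4 + 10*a^5 + 36*a^6 + (-24)*a^7 + 4*a^8)
     + \<gamma>*((-2)*a + 14*a^2 + (-36)*a^3 + 39*a^4 + (-8)*a^5 + (-17)*a^6 + 12*a^7 + (-2)*a^8)"
definition dPp :: "real \<Rightarrow> real \<Rightarrow> real" where
  "dPp \<gamma> a = ((-2) + (-30)*a + 174*a^2 + (-272)*a^3 + 50*a^4 + 216*a^5 + (-168)*a^6 + 32*a^7)
     + \<gamma>*((-2) + 28*a + (-108)*a^2 + 156*a^3 + (-40)*a^4 + (-102)*a^5 + 84*a^6 + (-16)*a^7)"

lemma Rp_pos: "0 \<le> a \<Longrightarrow> a \<le> 1/2 \<Longrightarrow> Rp a \<ge> 1/8"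
  using Rpol_lb[of a] unfolding Rp_def by simp

lemma D_pos: "0 \<le> a \<Longrightarrow> a \<le> (1/2::real) \<Longrightarrow> 2*a^3 - 4*a^2 + 1 \<ge> 1/4"
  using Dpol_lb[of a] by simp

lemma f_eq:
  assumes "B > 0" "0 \<le> a" "a \<le> 1/2"
  shows "f_sm B \<gamma> a = gq \<gamma> a"
proof -
  define D where "D = 2*a^3 - 4*a^2 + 1"
  have D: "D > 0" using D_pos[OF assms(2,3)] unfolding D_def by linarith
  have R: "Rp a > 0" using Rp_pos[OF assms(2,3)] by linarith
  have a1: "1 - a \<noteq> 0" using assms by linarith
  have hb: "b_h \<gamma> a = (1-2*a)*Qp \<gamma> a / D"
  proof -
    have "(2*a^4 - 5*a^3 + 4*a^2 - a) * \<gamma> - 4*a^4 + 10*a^3 - 6*a^2 - a + 1 = (1-2*a)*Qp \<gamma> a"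
      unfolding Qp_def by algebra
    then show ?thesis unfolding b_h_def D_def by simp
  qed
  have hs: "b_a \<gamma> a + b_h \<gamma> a = Rp a / D"
  proof -
    have "((-2*a^4 + 5*a^3 - 4*a^2 + a) * \<gamma> + 4*a^4 - 9*a^3 + 4*a^2)
       + ((2*a^4 - 5*a^3 + 4*a^2 - a) * \<gamma> - 4*a^4 + 10*a^3 - 6*a^2 - a + 1) = Rp a"
      unfolding Rp_def by algebra
    then show ?thesis unfolding b_h_def b_a_def D_def by (simp add: add_divide_distrib[symmetric])
  qed
  have "f_sm B \<gamma> a = a * (B * b_h \<gamma> a) / ((1 - a) * (B * (b_a \<gamma> a + b_h \<gamma> a)))"
    unfolding f_sm_def B_honest_def B_attacker_def by (simp add: distrib_left)
  also have "\<dots> = a * (B * ((1-2*a)*Qp \<gamma> a / D)) / ((1 - a) * (B * (Rp a / D)))"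
    by (subst hs, subst hb, rule refl)
  also have "\<dots> = gq \<gamma> a"
    unfolding gq_def using D R a1 assms(1) by (simp add: field_simps)
  finally show ?thesis .
qed

lemma gq_deriv:
  assumes "Rp a \<noteq> 0" "a \<noteq> 1"
  shows "(gq \<gamma> has_real_derivative Pp \<gamma> a / ((1-a)*Rp a)^2) (at a)"
proof -
  have "(gq \<gamma> has_real_derivative
     ((((1 - 2*a) + a*(-2))*Qp \<gamma> a + a*(1-2*a)*(6*a^2-8*a+1-\<gamma>*((1-a)^2 - 2*a*(1-a))))*((1-a)*Rp a)
      - a*(1-2*a)*Qp \<gamma> a*((-1)*Rp a + (1-a)*(3*a^2-4*a-1))) / ((1-a)*Rp a)^2) (at a)"
    unfolding gq_def[abs_def] Qp_def Rp_def
    apply (rule derivative_eq_intros refl | simp)+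
    subgoal using assms by (simp add: Rp_def)
    apply (rule arg_cong2[where f="(/)"])
     apply (simp add: numeral_eq_Suc)
     apply algebra
    apply (simp add: power2_eq_square)
    done
  moreover have "((((1 - 2*a) + a*(-2))*Qp \<gamma> a + a*(1-2*a)*(6*a^2-8*a+1-\<gamma>*((1-a)^2 - 2*a*(1-a))))*((1-a)*Rp a)
      - a*(1-2*a)*Qp \<gamma> a*((-1)*Rp a + (1-a)*(3*a^2-4*a-1))) = Pp \<gamma> a"
    unfolding Pp_def Qp_def Rp_def by algebra
  ultimately show ?thesis by simp
qed

lemma Pp_deriv: "(Pp \<gamma> has_real_derivative dPp \<gamma> a) (at a)"
  unfolding Pp_def[abs_def] dPp_def
  apply (rule derivative_eq_intros refl | simp)+
  done

lemma dPp_neg: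
  assumes "0 \<le> \<gamma>" "\<gamma> \<le> 1" "0 \<le> a" "a < 1/2"
  shows "dPp \<gamma> a < 0"
proof -
  define S0 where "S0 = 4 + 68*a + (-212)*a^2 + 120*a^3 + 140*a^4 + (-152)*a^5 + 32*a^6"
  define Sa where "Sa = 8 + 20*a + (-92)*a^2 + 48*a^3 + 76*a^4 + (-76)*a^5 + 16*a^6"
  have e: "dPp \<gamma> a = (a - 1/2)*((1-\<gamma>)*S0 + \<gamma>*Sa)"
    unfolding dPp_def S0_def Sa_def by algebra
  have s0: "S0 \<ge> 4" using S0pol_lb[of a] assms unfolding S0_def by simp
  have sa: "Sa \<ge> 29/8" using Sapol_lb[of a] assms unfolding Sa_def by simp
  have "(1-\<gamma>)*S0 \<ge> (1-\<gamma>)*4" using s0 assms by (intro mult_left_mono) auto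
  moreover have "\<gamma>*Sa \<ge> \<gamma>*(29/8)" using sa assms by (intro mult_left_mono) auto
  moreover have "(1-\<gamma>)*4 = 4 - 4*\<gamma>" "\<gamma>*(29/8) = 29/8*\<gamma>" by simp_all
  ultimately have "(1-\<gamma>)*S0 + \<gamma>*Sa > 0" using assms by linarith
  then show ?thesis unfolding e using assms by (intro mult_neg_pos) auto
qed

lemma Pp_dec:
  assumes "0 \<le> \<gamma>" "\<gamma> \<le> 1" "0 \<le> x" "x < y" "y \<le> 1/2"
  shows "Pp \<gamma> y < Pp \<gamma> x"
proof (rule DERIV_neg_imp_decreasing_open[OF assms(4)])
  fix t assume "x < t" "t < y"
  then show "\<exists>z. DERIV (Pp \<gamma>) t :> z \<and> z < 0"
    using Pp_deriv dPp_neg assms by (intro exI[of _ "dPp \<gamma> t"]) auto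
next
  show "continuous_on {x..y} (Pp \<gamma>)"
    by (rule DERIV_continuous_on[where D="dPp \<gamma>"]) (rule has_field_derivative_at_within[OF Pp_deriv])
qed

lemma gq_deriv':
  assumes "0 \<le> a" "a \<le> 1/2"
  shows "(gq \<gamma> has_real_derivative Pp \<gamma> a / ((1-a)*Rp a)^2) (at a)"
  using Rp_pos[OF assms] assms by (intro gq_deriv) auto

lemma gq_cont: "0 \<le> x \<Longrightarrow> y \<le> 1/2 \<Longrightarrow> continuous_on {x..y} (gq \<gamma>)"
  by (rule DERIV_continuous_on[where D="\<lambda>a. Pp \<gamma> a / ((1-a)*Rp a)^2"])
     (rule has_field_derivative_at_within, rule gq_deriv', auto)

lemma unimodal:
  assumes "0 \<le> \<gamma>" "\<gamma> \<le> 1"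
  shows "\<exists>m. 0 < m \<and> m < 1/2 \<and> (\<forall>x y. 0 \<le> x \<and> x < y \<and> y \<le> m \<longrightarrow> gq \<gamma> x < gq \<gamma> y)
            \<and> (\<forall>x y. m \<le> x \<and> x < y \<and> y \<le> 1/2 \<longrightarrow> gq \<gamma> y < gq \<gamma> x)"
proof -
  have p0: "Pp \<gamma> 0 = 1" by (simp add: Pp_def)
  have ph: "Pp \<gamma> (1/2) < 0" using assms by (simp add: Pp_def power_divide)
  have "continuous_on {0..1/2} (Pp \<gamma>)"
    by (rule DERIV_continuous_on[where D="dPp \<gamma>"]) (rule has_field_derivative_at_within[OF Pp_deriv])
  then obtain m where m: "0 \<le> m" "m \<le> 1/2" "Pp \<gamma> m = 0"
    using IVT2'[of "Pp \<gamma>" "1/2" 0 0] p0 ph by auto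
  have m0: "m \<noteq> 0" using m p0 by auto
  have m1: "m \<noteq> 1/2"
  proof
    assume "m = 1/2" with m(3) ph show False by simp
  qed
  have pos: "Pp \<gamma> t > 0" if "0 \<le> t" "t < m" for t
    using Pp_dec[OF assms that(1,2)] m by auto
  have neg: "Pp \<gamma> t < 0" if "m < t" "t \<le> 1/2" for t
    using Pp_dec[OF assms _ that] m by auto
  have inc: "gq \<gamma> x < gq \<gamma> y" if "0 \<le> x" "x < y" "y \<le> m" for x y
  proof (rule DERIV_pos_imp_increasing_open[OF that(2)])
    fix t assume t: "x < t" "t < y"
    have "(1-t)*Rp t \<noteq> 0" using Rp_pos[of t] t that m by auto
    then have "Pp \<gamma> t / ((1-t)*Rp t)^2 > 0" using pos[of t] t that by auto
    then show "\<exists>z. DERIV (gq \<gamma>) t :> z \<and> 0 < z"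
      using gq_deriv'[of t \<gamma>] t that m by auto
  next
    show "continuous_on {x..y} (gq \<gamma>)" using gq_cont that m by auto
  qed
  have dec: "gq \<gamma> y < gq \<gamma> x" if "m \<le> x" "x < y" "y \<le> 1/2" for x y
  proof (rule DERIV_neg_imp_decreasing_open[OF that(2)])
    fix t assume t: "x < t" "t < y"
    have "(1-t)*Rp t \<noteq> 0" using Rp_pos[of t] t that m by auto
    then have "Pp \<gamma> t / ((1-t)*Rp t)^2 < 0" using neg[of t] t that
      by (simp add: divide_neg_pos)
    then show "\<exists>z. DERIV (gq \<gamma>) t :> z \<and> z < 0"
      using gq_deriv'[of t \<gamma>] t that m by auto
  next
    show "continuous_on {x..y} (gq \<gamma>)" using gq_cont that m by auto
  qed
  show ?thesis using m m0 m1 inc dec by (intro exI[of _ m]) auto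
qed

lemma alpha_lt: "M > 0 \<Longrightarrow> H + M > 0 \<Longrightarrow> a > 0 \<Longrightarrow> (M/(H+M) < a) = (M/a - M < (H::real))"
  by (simp add: field_simps)

lemma alpha_gt: "M > 0 \<Longrightarrow> H + M > 0 \<Longrightarrow> a > 0 \<Longrightarrow> (a < M/(H+M)) = ((H::real) < M/a - M)"
  by (simp add: field_simps)

lemma U_alg:
  fixes B M al u X S :: real
  assumes "B \<noteq> 0" "M \<noteq> 0" "al \<noteq> 0" "u \<noteq> 0" "S \<noteq> 0"
  shows "B * (X / (u * B)) * (B / (S * (M / al))) = B/M * (al * X / (u * S))"
  using assms by (simp add: field_simps)

lemma U_eq:
  assumes "B > 0" "M > 0" "H > M"
  shows "U_S B C \<gamma> M H = B/M * gq \<gamma> (M/(H+M)) - C"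
proof -
  define al where "al = M/(H+M)"
  have al0: "0 \<le> al" "al \<le> 1/2" using assms unfolding al_def by (auto simp: field_simps)
  have fe: "f_sm B \<gamma> al = gq \<gamma> al" using f_eq[OF assms(1) al0] .
  have D: "2*al^3 - 4*al^2 + 1 > 0" using D_pos[OF al0] by linarith
  have R: "Rp al > 0" using Rp_pos[OF al0] by linarith
  have S: "B_attacker B \<gamma> al + B_honest B \<gamma> al \<noteq> 0"
  proof -
    have "b_a \<gamma> al + b_h \<gamma> al = Rp al / (2*al^3 - 4*al^2 + 1)"
    proof -
      have "((-2*al^4 + 5*al^3 - 4*al^2 + al) * \<gamma> + 4*al^4 - 9*al^3 + 4*al^2)
         + ((2*al^4 - 5*al^3 + 4*al^2 - al) * \<gamma> - 4*al^4 + 10*al^3 - 6*al^2 - al + 1) = Rp al"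
        unfolding Rp_def by algebra
      then show ?thesis unfolding b_h_def b_a_def by (simp add: add_divide_distrib[symmetric])
    qed
    then have "b_a \<gamma> al + b_h \<gamma> al > 0" using D R by simp
    then show ?thesis unfolding B_attacker_def B_honest_def using assms(1)
      by (simp add: distrib_left[symmetric])
  qed
  have hm: "H + M = M / al" using assms unfolding al_def by (simp add: field_simps)
  have a1: "1 - al \<noteq> 0" "al \<noteq> 0" using al0 assms unfolding al_def by auto
  have "U_S B C \<gamma> M H = B/M * f_sm B \<gamma> al - C"
    unfolding U_S_def Let_def f_sm_def al_def[symmetric] hm
    using S a1 assms by (subst U_alg) auto
  then show ?thesis using fe al_def by simp
qed


theorem proposition1:
  fixes B C \<gamma> M :: real
  assumes "B > 0" and "C > 0" and "0 \<le> \<gamma>" and "\<gamma> \<le> 1"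
    and "0 < M" and "M < M_max B C \<gamma>"
  shows "\<exists>H1 H2. H1 < H2
           \<and> {H. equilibrium (U_S B C \<gamma> M) M H} = {H1, H2}
           \<and> stable_eq (U_S B C \<gamma> M) H2
           \<and> unstable_eq (U_S B C \<gamma> M) H1"
proof -
  obtain m where m: "0 < m" "m < 1/2"
    and inc: "\<And>x y. 0 \<le> x \<Longrightarrow> x < y \<Longrightarrow> y \<le> m \<Longrightarrow> gq \<gamma> x < gq \<gamma> y"
    and dec: "\<And>x y. m \<le> x \<Longrightarrow> x < y \<Longrightarrow> y \<le> 1/2 \<Longrightarrow> gq \<gamma> y < gq \<gamma> x"
    using unimodal[OF assms(3,4)] by blast
  have le_m: "gq \<gamma> x \<le> gq \<gamma> m" if "0 \<le> x" "x \<le> 1/2" for x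
  proof (cases x m rule: linorder_cases)
    case less then show ?thesis using inc[of x m] that by auto
  next
    case equal then show ?thesis by simp
  next
    case greater then show ?thesis using dec[of m x] that by auto
  qed
  have img: "f_sm B \<gamma> ` {0..1/2} = gq \<gamma> ` {0..1/2}"
    using f_eq[OF assms(1)] by (intro image_cong) auto
  have sup: "Sup (f_sm B \<gamma> ` {0..1/2}) = gq \<gamma> m"
    unfolding img using m le_m by (intro cSup_eq_maximum) auto
  define c where "c = C*M/B"
  have c0: "c > 0" unfolding c_def using assms by simp
  have cm: "c < gq \<gamma> m"
  proof -
    have "M < B / C * gq \<gamma> m" using assms(6) unfolding M_max_def sup .
    then have "C*M < B * gq \<gamma> m" using assms(2) by (simp add: field_simps)
    then show ?thesis unfolding c_def using assms(1) by (simp add: field_simps)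
  qed
  have g0: "gq \<gamma> 0 = 0" and gh: "gq \<gamma> (1/2) = 0" by (simp_all add: gq_def)
  obtain a1 where a1: "0 \<le> a1" "a1 \<le> m" "gq \<gamma> a1 = c"
    using IVT'[of "gq \<gamma>" 0 c m] g0 c0 cm m gq_cont[of 0 m \<gamma>] by auto
  obtain a2 where a2: "m \<le> a2" "a2 \<le> 1/2" "gq \<gamma> a2 = c"
    using IVT2'[of "gq \<gamma>" "1/2" c m] gh c0 cm m gq_cont[of m "1/2" \<gamma>] by auto
  have a1b: "0 < a1" "a1 < m" using a1 g0 c0 cm by (auto simp: le_less)
  have a2n: "a2 \<noteq> 1/2"
  proof
    assume "a2 = 1/2" with a2(3) gh c0 show False by simp
  qed
  have a2b: "m < a2" "a2 < 1/2" using a2 a2n c0 cm by (auto simp: le_less)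
  have S1: "gq \<gamma> a < c" if "0 \<le> a" "a < a1" for a using inc[of a a1] that a1 a1b by auto
  have S2: "gq \<gamma> a > c" if "a1 < a" "a < a2" for a
  proof (cases "a \<le> m")
    case True then show ?thesis using inc[of a1 a] that a1 a1b by auto
  next
    case False then show ?thesis using dec[of a a2] that a2 a2b by auto
  qed
  have S3: "gq \<gamma> a < c" if "a2 < a" "a \<le> 1/2" for a using dec[of a2 a] that a2 a2b by auto
  define al where "al H = M/(H+M)" for H
  define hof where "hof a = M/a - M" for a
  have U: "U_S B C \<gamma> M H = B/M * gq \<gamma> (al H) - C" if "H > M" for H
    using U_eq[OF assms(1,5) that] unfolding al_def by simp
  have Upos: "(U_S B C \<gamma> M H > 0) = (gq \<gamma> (al H) > c)" if "H > M" for H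
    unfolding U[OF that] c_def using assms by (simp add: field_simps)
  have Uneg: "(U_S B C \<gamma> M H < 0) = (gq \<gamma> (al H) < c)" if "H > M" for H
    unfolding U[OF that] c_def using assms by (simp add: field_simps)
  have Uz: "(U_S B C \<gamma> M H = 0) = (gq \<gamma> (al H) = c)" if "H > M" for H
    unfolding U[OF that] c_def using assms by (auto simp: field_simps)
  have alr: "0 < al H" "al H < 1/2" if "H > M" for H
    using that assms unfolding al_def by (auto simp: field_simps)
  have alt: "(al H < a) = (hof a < H)" if "H > M" "a > 0" for H a
    unfolding al_def hof_def using alpha_lt[of M H a] that assms by auto
  have agt: "(a < al H) = (H < hof a)" if "H > M" "a > 0" for H a
    unfolding al_def hof_def using alpha_gt[of M H a] that assms by auto
  have alhof: "al (hof a) = a" if "a > 0" for a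
    unfolding al_def hof_def using that assms by (simp add: field_simps)
  have hofM: "hof a > M" if "0 < a" "a < 1/2" for a
    unfolding hof_def using that assms by (simp add: field_simps)
  have hofinj: "hof (al H) = H" if "H > M" for H
    unfolding al_def hof_def using that assms by (simp add: field_simps)
  define H1 where "H1 = hof a2"
  define H2 where "H2 = hof a1"
  have H1M: "H1 > M" unfolding H1_def using hofM a2b m by auto
  have H2M: "H2 > M" unfolding H2_def using hofM a1b m by auto
  have hm: "hof m > M" using hofM m by auto
  have a2p: "0 < a2" using a2b m by linarith
  have aH2: "al H2 = a1" unfolding H2_def by (rule alhof[OF a1b(1)])
  have aH1: "al H1 = a2" unfolding H1_def by (rule alhof[OF a2p])
  have "hof a2 < H2" using alt[OF H2M a2p] aH2 a1b a2b by simp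
  then have H12: "H1 < H2" by (simp add: H1_def)
  have Hm2: "hof m < H2" using alt[OF H2M m(1)] aH2 a1b by simp
  have Hm1: "H1 < hof m" using agt[OF H1M m(1)] aH1 a2b by simp
  have eqset: "{H. equilibrium (U_S B C \<gamma> M) M H} = {H1, H2}"
  proof (intro set_eqI iffI)
    fix H assume "H \<in> {H. equilibrium (U_S B C \<gamma> M) M H}"
    then have H: "H > M" "gq \<gamma> (al H) = c" unfolding equilibrium_def using Uz by auto
    have r: "0 < al H" "al H < 1/2" using alr[OF H(1)] by auto
    have "al H = a1 \<or> al H = a2"
    proof (rule ccontr)
      assume n: "\<not> ?thesis"
      then have "al H < a1 \<or> (a1 < al H \<and> al H < a2) \<or> a2 < al H" by linarith
      moreover have "\<not> al H < a1" using S1[of "al H"] r H(2) by auto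
      moreover have "\<not> (a1 < al H \<and> al H < a2)" using S2[of "al H"] H(2) by auto
      moreover have "\<not> a2 < al H" using S3[of "al H"] r H(2) by auto
      ultimately show False by blast
    qed
    then have "hof (al H) = hof a1 \<or> hof (al H) = hof a2" by auto
    then show "H \<in> {H1, H2}" unfolding H1_def H2_def hofinj[OF H(1)] by auto
  next
    fix H assume "H \<in> {H1, H2}"
    then have "H = H1 \<or> H = H2" by simp
    then show "H \<in> {H. equilibrium (U_S B C \<gamma> M) M H}"
    proof
      assume "H = H1" then show ?thesis
        unfolding equilibrium_def using H1M Uz[OF H1M] aH1 a2(3) by simp
    next
      assume "H = H2" then show ?thesis
        unfolding equilibrium_def using H2M Uz[OF H2M] aH2 a1(3) by simp
    qed
  qed
  have st: "stable_eq (U_S B C \<gamma> M) H2"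
    unfolding stable_eq_def
  proof (intro exI[of _ "min (H2 - M) (H2 - hof m)"] conjI ballI)
    show "min (H2 - M) (H2 - hof m) > 0" using H2M Hm2 by simp
  next
    fix H assume H: "H \<in> {H2 - min (H2 - M) (H2 - hof m)<..<H2}"
    then have HM: "H > M" "H > hof m" "H < H2" by auto
    have x1: "al H < m" using alt[OF HM(1) m(1)] HM(2) by simp
    have x2: "a1 < al H" using agt[OF HM(1) a1b(1)] HM(3) unfolding H2_def by simp
    have "c < gq \<gamma> (al H)" using S2[OF x2] x1 a2b by linarith
    then show "U_S B C \<gamma> M H > 0" using Upos[OF HM(1)] by simp
  next
    fix H assume H: "H \<in> {H2<..<H2 + min (H2 - M) (H2 - hof m)}"
    then have HM: "H > M" "H > H2" using H2M by auto
    have x: "al H < a1" using alt[OF HM(1) a1b(1)] HM(2) unfolding H2_def by simp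
    have "gq \<gamma> (al H) < c" using S1[OF _ x] alr[OF HM(1)] by simp
    then show "U_S B C \<gamma> M H < 0" using Uneg[OF HM(1)] by simp
  qed
  have ust: "unstable_eq (U_S B C \<gamma> M) H1"
    unfolding unstable_eq_def
  proof (intro exI[of _ "min (H1 - M) (hof m - H1)"] conjI ballI)
    show "min (H1 - M) (hof m - H1) > 0" using H1M Hm1 by simp
  next
    fix H assume H: "H \<in> {H1 - min (H1 - M) (hof m - H1)<..<H1}"
    then have HM: "H > M" "H < H1" by auto
    have x: "a2 < al H" using agt[OF HM(1) a2p] HM(2) unfolding H1_def by simp
    have "gq \<gamma> (al H) < c" using S3[OF x] alr[OF HM(1)] by simp
    then show "U_S B C \<gamma> M H < 0" using Uneg[OF HM(1)] by simp
  next
    fix H assume H: "H \<in> {H1<..<H1 + min (H1 - M) (hof m - H1)}"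
    then have HM: "H > M" "H > H1" "H < hof m" using H1M by auto
    have x1: "m < al H" using agt[OF HM(1) m(1)] HM(3) by simp
    have x2: "al H < a2" using alt[OF HM(1) a2p] HM(2) unfolding H1_def by simp
    have "c < gq \<gamma> (al H)" using S2[OF _ x2] x1 a1b by linarith
    then show "U_S B C \<gamma> M H > 0" using Upos[OF HM(1)] by simp
  qed
  show ?thesis using H12 eqset st ust by blast
qed

end
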